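(* Let $n\ge 2$, let $A\in\mathbb R^{n\times n}$ have $A_{i,i+1}=1$ ($i=1,\dots,n-1$) and all other entries $0$, and $b=(0,\dots,0,1)^T$ with entries $b_i$. Consider the discrete system $$\xi(t+1) = A\xi(t) + b\mu(t) + \mathfrak F^{[2]}(\xi(t)) + G\xi(t)\mu(t) + h\mu(t)^2 + O(\xi,\mu)^3,$$ with $\mathfrak F^{[2]}(\xi)=(\xi^TF_1\xi,\dots,\xi^TF_n\xi)^T$, symmetric $F_i\in\mathbb R^{n\times n}$, $G\in\mathbb R^{n\times n}$, $h\in\mathbb R^n$. Write $$\sum_{i=1}^{n-1}\mathbf X_iF_iA + \tfrac12G = L + D + U$$ with $L$ strictly lower triangular, $D$ diagonal and $U$ strictly upper triangular. Then the Brunovsky form of this system (its quadratically equivalent system, under transformations $\xi=x+\mathfrak P^{[2]}(x)+O(x)^3$, $\mu=\nu-x^TQx+O(x,\nu)^3$ with symmetric $P_1,\dots,P_n,Q$, of the form $x_i(t+1)=x_{i+1}(t)+b_i\nu(t)+x^T\bar F_ix+\bar G_ix\nu+O(x,\nu)^3$, $x_{n+1}\equiv0$) has coefficients $$\bar F_i = 0\ (i=1,\dots,n),\qquad \bar G = 2(L+D),$$ i.e. it reads $x_i(t+1) = x_{i+1}(t) + b_i\nu(t) + \sum_{j=1}^{i}\bar G_{ij}x_j(t)\nu(t) + O(x,\nu)^3$, $i=1,\dots,n$.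
   Context: $\mathfrak P^{[2]}(x)=(x^TP_1x,\dots,x^TP_nx)^T$. $\mathbf L:\mathbb R^{n\times n}\to\mathbb R^{n\times n}$ is $\mathbf LP=A^TPA$, with $\mathbf L^0P=P$ and $\mathbf L^{k+1}=\mathbf L\circ\mathbf L^k$. $\mathbf X_0P$ is the $n\times n$ matrix whose $k$th row ($k=1,\dots,n$) is the $n$th row of $\mathbf L^{k-1}P$, and $\mathbf X_iP=(A^T)^i\mathbf X_0P$ for $i\ge1$. $O(\cdot)^3$ denotes terms of total degree at least three. Quadratic equivalence means the original system is transformed into the new one (up to terms of degree three and higher) by substituting the given transformation; the Brunovsky form is the quadratically equivalent system with the fewest nonlinear (quadratic/bilinear) terms. *)

theory Defs
  imports Complex_Main
begin

text \<open>Convention: n is the state dimension; vectors are functions nat \<Rightarrow> real and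
  n\<times>n matrices are functions nat \<Rightarrow> nat \<Rightarrow> real, indexed 1-based over {1..n}
  (values outside {1..n} are never used).\<close>

definition mmul :: "nat \<Rightarrow> (nat \<Rightarrow> nat \<Rightarrow> real) \<Rightarrow> (nat \<Rightarrow> nat \<Rightarrow> real) \<Rightarrow> nat \<Rightarrow> nat \<Rightarrow> real" where
  "mmul n M N = (\<lambda>i j. \<Sum>k=1..n. M i k * N k j)"

definition mtrans :: "(nat \<Rightarrow> nat \<Rightarrow> real) \<Rightarrow> nat \<Rightarrow> nat \<Rightarrow> real" where
  "mtrans M = (\<lambda>i j. M j i)"

definition matvec :: "nat \<Rightarrow> (nat \<Rightarrow> nat \<Rightarrow> real) \<Rightarrow> (nat \<Rightarrow> real) \<Rightarrow> nat \<Rightarrow> real" where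
  "matvec n M x = (\<lambda>i. \<Sum>j=1..n. M i j * x j)"

definition quadform :: "nat \<Rightarrow> (nat \<Rightarrow> nat \<Rightarrow> real) \<Rightarrow> (nat \<Rightarrow> real) \<Rightarrow> real" where
  "quadform n P x = (\<Sum>j=1..n. \<Sum>k=1..n. x j * P j k * x k)"

definition symm :: "nat \<Rightarrow> (nat \<Rightarrow> nat \<Rightarrow> real) \<Rightarrow> bool" where
  "symm n P \<longleftrightarrow> (\<forall>j\<in>{1..n}. \<forall>k\<in>{1..n}. P j k = P k j)"

definition Amat :: "nat \<Rightarrow> nat \<Rightarrow> nat \<Rightarrow> real" where
  "Amat n = (\<lambda>i j. if 1 \<le> i \<and> i < n \<and> j = i + 1 then 1 else 0)"

definition bvec :: "nat \<Rightarrow> nat \<Rightarrow> real" where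
  "bvec n = (\<lambda>i. if i = n then 1 else 0)"

definition Lop :: "nat \<Rightarrow> (nat \<Rightarrow> nat \<Rightarrow> real) \<Rightarrow> nat \<Rightarrow> nat \<Rightarrow> real" where
  "Lop n P = mmul n (mtrans (Amat n)) (mmul n P (Amat n))"

definition X0 :: "nat \<Rightarrow> (nat \<Rightarrow> nat \<Rightarrow> real) \<Rightarrow> nat \<Rightarrow> nat \<Rightarrow> real" where
  "X0 n P = (\<lambda>k j. ((Lop n ^^ (k - 1)) P) n j)"

definition Xop :: "nat \<Rightarrow> nat \<Rightarrow> (nat \<Rightarrow> nat \<Rightarrow> real) \<Rightarrow> nat \<Rightarrow> nat \<Rightarrow> real" where
  "Xop n i P = ((\<lambda>M. mmul n (mtrans (Amat n)) M) ^^ i) (X0 n P)"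

definition sys_map :: "nat \<Rightarrow> (nat \<Rightarrow> nat \<Rightarrow> nat \<Rightarrow> real) \<Rightarrow> (nat \<Rightarrow> nat \<Rightarrow> real) \<Rightarrow> (nat \<Rightarrow> real)
    \<Rightarrow> (nat \<Rightarrow> real) \<Rightarrow> real \<Rightarrow> nat \<Rightarrow> real" where
  "sys_map n F G h z u = (\<lambda>i. matvec n (Amat n) z i + bvec n i * u + quadform n (F i) z
       + matvec n G z i * u + h i * u ^ 2)"

definition is_O3 :: "nat \<Rightarrow> ((nat \<Rightarrow> real) \<Rightarrow> real \<Rightarrow> nat \<Rightarrow> real) \<Rightarrow> bool" where
  "is_O3 n R \<longleftrightarrow> (\<exists>C \<delta>. \<delta> > 0 \<and> (\<forall>x \<nu>. (\<Sum>j=1..n. \<bar>x j\<bar>) + \<bar>\<nu>\<bar> < \<delta> \<longrightarrow>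
       (\<forall>i\<in>{1..n}. \<bar>R x \<nu> i\<bar> \<le> C * ((\<Sum>j=1..n. \<bar>x j\<bar>) + \<bar>\<nu>\<bar>) ^ 3)))"

text \<open>Quadratic equivalence: substituting \<xi> = x + P(x), \<mu> = \<nu> - x^T Q x (symmetric P_i, Q)
  into the original system yields the new one up to terms of degree \<ge> 3, i.e.
  \<xi>(t+1) = x(t+1) + P(x(t+1)) agrees with f(\<xi>(t),\<mu>(t)) up to O(x,\<nu>)^3.\<close>
definition quad_equiv :: "nat \<Rightarrow> (nat \<Rightarrow> nat \<Rightarrow> nat \<Rightarrow> real) \<Rightarrow> (nat \<Rightarrow> nat \<Rightarrow> real) \<Rightarrow> (nat \<Rightarrow> real)
    \<Rightarrow> (nat \<Rightarrow> nat \<Rightarrow> nat \<Rightarrow> real) \<Rightarrow> (nat \<Rightarrow> nat \<Rightarrow> real) \<Rightarrow> (nat \<Rightarrow> real) \<Rightarrow> bool" where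
  "quad_equiv n F G h Fb Gb hb \<longleftrightarrow>
     (\<exists>P Q. (\<forall>i\<in>{1..n}. symm n (P i)) \<and> symm n Q \<and>
        is_O3 n (\<lambda>x \<nu>. let \<Phi> = (\<lambda>y. (\<lambda>i. y i + quadform n (P i) y));
                            x' = sys_map n Fb Gb hb x \<nu>
                        in (\<lambda>i. \<Phi> x' i - sys_map n F G h (\<Phi> x) (\<nu> - quadform n Q x) i)))"

text \<open>Number of nonlinear terms of x_i(t+1) = x_{i+1} + b_i \<nu> + x^T Fb_i x + Gb_i x \<nu>
  (Fb_i symmetric): monomials x_j x_k (j \<le> k) and x_j \<nu> with nonzero coefficient.\<close>
definition nterms :: "nat \<Rightarrow> (nat \<Rightarrow> nat \<Rightarrow> nat \<Rightarrow> real) \<Rightarrow> (nat \<Rightarrow> nat \<Rightarrow> real) \<Rightarrow> nat" where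
  "nterms n Fb Gb =
     card {(i, j, k). i \<in> {1..n} \<and> j \<in> {1..n} \<and> k \<in> {1..n} \<and> j \<le> k \<and> Fb i j k \<noteq> 0}
   + card {(i, j). i \<in> {1..n} \<and> j \<in> {1..n} \<and> Gb i j \<noteq> 0}"

text \<open>(Fb, Gb) is a Brunovsky form of the system (F, G, h): it is a quadratically equivalent
  system of the form x_i(t+1) = x_{i+1} + b_i \<nu> + x^T Fb_i x + Gb_i x \<nu> + O^3 (no \<nu>^2 terms)
  with the fewest nonlinear terms among all such quadratically equivalent systems.\<close>
definition is_brunovsky :: "nat \<Rightarrow> (nat \<Rightarrow> nat \<Rightarrow> nat \<Rightarrow> real) \<Rightarrow> (nat \<Rightarrow> nat \<Rightarrow> real) \<Rightarrow> (nat \<Rightarrow> real)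
    \<Rightarrow> (nat \<Rightarrow> nat \<Rightarrow> nat \<Rightarrow> real) \<Rightarrow> (nat \<Rightarrow> nat \<Rightarrow> real) \<Rightarrow> bool" where
  "is_brunovsky n F G h Fb Gb \<longleftrightarrow>
     (\<forall>i\<in>{1..n}. symm n (Fb i)) \<and> quad_equiv n F G h Fb Gb (\<lambda>_. 0) \<and>
     (\<forall>Fb' Gb'. (\<forall>i\<in>{1..n}. symm n (Fb' i)) \<and> quad_equiv n F G h Fb' Gb' (\<lambda>_. 0)
        \<longrightarrow> nterms n Fb Gb \<le> nterms n Fb' Gb')"

definition Mmat :: "nat \<Rightarrow> (nat \<Rightarrow> nat \<Rightarrow> nat \<Rightarrow> real) \<Rightarrow> (nat \<Rightarrow> nat \<Rightarrow> real) \<Rightarrow> nat \<Rightarrow> nat \<Rightarrow> real" where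
  "Mmat n F G = (\<lambda>j k. (\<Sum>i=1..n-1. mmul n (Xop n i (F i)) (Amat n) j k) + G j k / 2)"

definition lower_diag :: "(nat \<Rightarrow> nat \<Rightarrow> real) \<Rightarrow> nat \<Rightarrow> nat \<Rightarrow> real" where
  "lower_diag M = (\<lambda>j k. if k \<le> j then M j k else 0)"

end

theory Submission
  imports Defs
begin


definition sz :: "nat \<Rightarrow> (nat \<Rightarrow> real) \<Rightarrow> real \<Rightarrow> real" where
  "sz n x \<nu> = (\<Sum>j=1..n. \<bar>x j\<bar>) + \<bar>\<nu>\<bar>"

definition ordk :: "nat \<Rightarrow> nat \<Rightarrow> ((nat \<Rightarrow> real) \<Rightarrow> real \<Rightarrow> real) \<Rightarrow> bool" where
  "ordk n k g \<longleftrightarrow> (\<exists>C. \<forall>x \<nu>. sz n x \<nu> \<le> 1 \<longrightarrow> \<bar>g x \<nu>\<bar> \<le> C * sz n x \<nu> ^ k)"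

definition bil :: "nat \<Rightarrow> (nat \<Rightarrow> nat \<Rightarrow> real) \<Rightarrow> (nat \<Rightarrow> real) \<Rightarrow> (nat \<Rightarrow> real) \<Rightarrow> real" where
  "bil n P u v = (\<Sum>j=1..n. \<Sum>k=1..n. u j * P j k * v k)"

lemma sz_nonneg: "0 \<le> sz n x \<nu>"
  unfolding sz_def by (simp add: sum_nonneg)

lemma ord_add:
  assumes "ordk n k f" "ordk n k g" shows "ordk n k (\<lambda>x \<nu>. f x \<nu> + g x \<nu>)"
proof -
  obtain C1 where 1: "\<forall>x \<nu>. sz n x \<nu> \<le> 1 \<longrightarrow> \<bar>f x \<nu>\<bar> \<le> C1 * sz n x \<nu> ^ k" using assms(1) ordk_def by blast
  obtain C2 where 2: "\<forall>x \<nu>. sz n x \<nu> \<le> 1 \<longrightarrow> \<bar>g x \<nu>\<bar> \<le> C2 * sz n x \<nu> ^ k" using assms(2) ordk_def by blast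
  show ?thesis unfolding ordk_def
  proof (intro exI[of _ "C1 + C2"] allI impI)
    fix x \<nu> assume "sz n x \<nu> \<le> 1"
    then have "\<bar>f x \<nu>\<bar> \<le> C1 * sz n x \<nu> ^ k" "\<bar>g x \<nu>\<bar> \<le> C2 * sz n x \<nu> ^ k" using 1 2 by auto
    then show "\<bar>f x \<nu> + g x \<nu>\<bar> \<le> (C1 + C2) * sz n x \<nu> ^ k" by (simp add: distrib_right abs_triangle_ineq order_trans[OF abs_triangle_ineq])
  qed
qed

lemma ord_uminus:
  assumes "ordk n k f" shows "ordk n k (\<lambda>x \<nu>. - f x \<nu>)"
  using assms unfolding ordk_def by simp

lemma ord_diff:
  assumes "ordk n k f" "ordk n k g" shows "ordk n k (\<lambda>x \<nu>. f x \<nu> - g x \<nu>)"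
  using ord_add[OF assms(1) ord_uminus[OF assms(2)]] by simp

lemma ord_abs:
  assumes "ordk n k f" shows "ordk n k (\<lambda>x \<nu>. \<bar>f x \<nu>\<bar>)"
  using assms unfolding ordk_def by simp

lemma ord_mult:
  assumes "ordk n a f" "ordk n b g" "k = a + b" shows "ordk n k (\<lambda>x \<nu>. f x \<nu> * g x \<nu>)"
proof -
  obtain C1 where 1: "\<forall>x \<nu>. sz n x \<nu> \<le> 1 \<longrightarrow> \<bar>f x \<nu>\<bar> \<le> C1 * sz n x \<nu> ^ a" using assms(1) ordk_def by blast
  obtain C2 where 2: "\<forall>x \<nu>. sz n x \<nu> \<le> 1 \<longrightarrow> \<bar>g x \<nu>\<bar> \<le> C2 * sz n x \<nu> ^ b" using assms(2) ordk_def by blast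
  show ?thesis unfolding ordk_def
  proof (intro exI[of _ "C1 * C2"] allI impI)
    fix x \<nu> assume "sz n x \<nu> \<le> 1"
    then have h: "\<bar>f x \<nu>\<bar> \<le> C1 * sz n x \<nu> ^ a" "\<bar>g x \<nu>\<bar> \<le> C2 * sz n x \<nu> ^ b" using 1 2 by auto
    have "\<bar>f x \<nu> * g x \<nu>\<bar> = \<bar>f x \<nu>\<bar> * \<bar>g x \<nu>\<bar>" by (simp add: abs_mult)
    also have "\<dots> \<le> (C1 * sz n x \<nu> ^ a) * (C2 * sz n x \<nu> ^ b)"
      by (rule mult_mono[OF h(1) h(2)]) (use h in auto)
    also have "\<dots> = (C1 * C2) * sz n x \<nu> ^ k" by (simp add: assms(3) power_add)
    finally show "\<bar>f x \<nu> * g x \<nu>\<bar> \<le> (C1 * C2) * sz n x \<nu> ^ k" .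
  qed
qed

lemma ord_mono:
  assumes "ordk n j f" "k \<le> j" shows "ordk n k f"
proof -
  obtain C where 1: "\<forall>x \<nu>. sz n x \<nu> \<le> 1 \<longrightarrow> \<bar>f x \<nu>\<bar> \<le> C * sz n x \<nu> ^ j" using assms(1) ordk_def by blast
  show ?thesis unfolding ordk_def
  proof (intro exI[of _ "\<bar>C\<bar>"] allI impI)
    fix x \<nu> assume s: "sz n x \<nu> \<le> 1"
    have "\<bar>f x \<nu>\<bar> \<le> C * sz n x \<nu> ^ j" using 1 s by auto
    also have "\<dots> \<le> \<bar>C\<bar> * sz n x \<nu> ^ j" by (simp add: mult_right_mono sz_nonneg)
    also have "\<dots> \<le> \<bar>C\<bar> * sz n x \<nu> ^ k"
      by (rule mult_left_mono) (auto intro: power_decreasing assms(2) s sz_nonneg)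
    finally show "\<bar>f x \<nu>\<bar> \<le> \<bar>C\<bar> * sz n x \<nu> ^ k" .
  qed
qed

lemma ord_const: "ordk n 0 (\<lambda>x \<nu>. c)"
  unfolding ordk_def by (intro exI[of _ "\<bar>c\<bar>"]) simp

lemma ord_x: assumes "j \<in> {1..n}" shows "ordk n 1 (\<lambda>x \<nu>. x j)"
  unfolding ordk_def
proof (intro exI[of _ 1] allI impI)
  fix x :: "nat \<Rightarrow> real" and \<nu> :: real
  have "\<bar>x j\<bar> \<le> (\<Sum>j=1..n. \<bar>x j\<bar>)" by (rule member_le_sum[of j _ "\<lambda>j. \<bar>x j\<bar>"]) (use assms in auto)
  then show "\<bar>x j\<bar> \<le> 1 * sz n x \<nu> ^ 1" unfolding sz_def by simp
qed

lemma ord_nu: "ordk n 1 (\<lambda>x \<nu>. \<nu>)"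
  unfolding ordk_def sz_def by (intro exI[of _ 1]) (simp add: sum_nonneg)

lemma ord_sum:
  assumes "finite S" "\<forall>j\<in>S. ordk n k (\<lambda>x \<nu>. f j x \<nu>)"
  shows "ordk n k (\<lambda>x \<nu>. \<Sum>j\<in>S. f j x \<nu>)"
  using assms
proof (induction S rule: finite_induct)
  case empty then show ?case unfolding ordk_def by (intro exI[of _ 0]) simp
next
  case (insert a S)
  then show ?case by (simp add: ord_add)
qed

lemma ord_bil:
  assumes "\<forall>j\<in>{1..n}. ordk n a (\<lambda>x \<nu>. u x \<nu> j)" "\<forall>j\<in>{1..n}. ordk n b (\<lambda>x \<nu>. v x \<nu> j)" "k = a + b"
  shows "ordk n k (\<lambda>x \<nu>. bil n P (u x \<nu>) (v x \<nu>))"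
  unfolding bil_def
  apply (rule ord_sum, simp, intro ballI)
  apply (rule ord_sum, simp, intro ballI)
  apply (rule ord_mult[where a = a and b = b])
    apply (rule ord_mult[where a = a and b = 0])
  using assms by (auto intro: ord_const)

lemma ord_matvec:
  assumes "\<forall>j\<in>{1..n}. ordk n a (\<lambda>x \<nu>. u x \<nu> j)"
  shows "ordk n a (\<lambda>x \<nu>. matvec n M (u x \<nu>) i)"
  unfolding matvec_def
  apply (rule ord_sum, simp, intro ballI)
  apply (rule ord_mult[where a = 0 and b = a])
  using assms by (auto intro: ord_const)

lemma quadform_bil: "quadform n P x = bil n P x x"
  unfolding quadform_def bil_def ..

lemma ord_quad:
  assumes "\<forall>j\<in>{1..n}. ordk n a (\<lambda>x \<nu>. u x \<nu> j)" "k = a + a"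
  shows "ordk n k (\<lambda>x \<nu>. quadform n P (u x \<nu>))"
  unfolding quadform_bil using ord_bil[OF assms(1) assms(1) assms(2)] .




lemma quadform_add: "quadform n P (\<lambda>j. u j + v j) = quadform n P u + bil n P u v + bil n P v u + quadform n P v"
  unfolding quadform_def bil_def by (simp add: algebra_simps sum.distrib)

lemma matvec_add: "matvec n M (\<lambda>j. u j + v j) i = matvec n M u i + matvec n M v i"
  unfolding matvec_def by (simp add: algebra_simps sum.distrib)

lemma quadform_madd: "quadform n (\<lambda>a b. X a b + Y a b) x = quadform n X x + quadform n Y x"
  unfolding quadform_def by (simp add: algebra_simps sum.distrib)

lemma quadform_msub: "quadform n (\<lambda>a b. X a b - Y a b) x = quadform n X x - quadform n Y x"
  unfolding quadform_def by (simp add: algebra_simps sum_subtractf)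

lemma quadform_zero: "quadform n (\<lambda>a b. 0) x = 0"
  unfolding quadform_def by simp

lemma swap_aux: "(\<Sum>j\<in>A. (\<Sum>a\<in>B. f j a) * g j) = (\<Sum>a\<in>B. \<Sum>j\<in>A. f j a * (g j::real))"
  by (simp add: sum_distrib_right sum.swap[of _ A B])

lemma swap_aux2: "(\<Sum>j\<in>A. g j * (\<Sum>a\<in>B. f j a)) = (\<Sum>a\<in>B. \<Sum>j\<in>A. g j * (f j a::real))"
  by (simp add: sum_distrib_left sum.swap[of _ A B])

lemma matvec_mmul: "matvec n M (matvec n N x) i = matvec n (mmul n M N) x i"
proof -
  have "matvec n M (matvec n N x) i = (\<Sum>j=1..n. M i j * (\<Sum>a=1..n. N j a * x a))"
    unfolding matvec_def ..
  also have "\<dots> = (\<Sum>a=1..n. \<Sum>j=1..n. M i j * (N j a * x a))" by (rule swap_aux2)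
  also have "\<dots> = matvec n (mmul n M N) x i"
    unfolding matvec_def mmul_def by (simp add: sum_distrib_right mult.assoc)
  finally show ?thesis .
qed

lemma quadform_alt: "quadform n P y = (\<Sum>j=1..n. y j * matvec n P y j)"
  unfolding quadform_def matvec_def by (simp add: sum_distrib_left mult.assoc)

lemma quadform_matvec: "quadform n P (matvec n M x) = quadform n (mmul n (mtrans M) (mmul n P M)) x"
proof -
  have "quadform n P (matvec n M x) = (\<Sum>j=1..n. (\<Sum>a=1..n. M j a * x a) * matvec n (mmul n P M) x j)"
    unfolding quadform_alt matvec_mmul[symmetric] unfolding matvec_def ..
  also have "\<dots> = (\<Sum>a=1..n. \<Sum>j=1..n. M j a * x a * matvec n (mmul n P M) x j)" by (rule swap_aux)
  also have "\<dots> = (\<Sum>a=1..n. x a * (\<Sum>j=1..n. mtrans M a j * matvec n (mmul n P M) x j))"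
    by (simp add: sum_distrib_left mtrans_def algebra_simps)
  also have "\<dots> = (\<Sum>a=1..n. x a * matvec n (mmul n (mtrans M) (mmul n P M)) x a)"
  proof (rule sum.cong[OF refl])
    fix a
    have "(\<Sum>j=1..n. mtrans M a j * matvec n (mmul n P M) x j) = matvec n (mtrans M) (matvec n (mmul n P M) x) a"
      by (simp add: matvec_def[of n "mtrans M"])
    then show "x a * (\<Sum>j=1..n. mtrans M a j * matvec n (mmul n P M) x j) = x a * matvec n (mmul n (mtrans M) (mmul n P M)) x a"
      by (simp add: matvec_mmul)
  qed
  finally show ?thesis unfolding quadform_alt .
qed

lemma sum_bvec: "1 \<le> n \<Longrightarrow> (\<Sum>k=1..n. f k * (bvec n k * c)) = f n * c"
  unfolding bvec_def by (simp add: if_distrib if_distribR cong: if_cong)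

lemma sum_bvec2: "1 \<le> n \<Longrightarrow> (\<Sum>k=1..n. bvec n k * c * f k) = c * f n"
  unfolding bvec_def by (simp add: if_distrib if_distribR cong: if_cong)

lemma bil_bvec_r: "1 \<le> n \<Longrightarrow> bil n P u (\<lambda>k. bvec n k * c) = c * (\<Sum>j=1..n. u j * P j n)"
proof -
  assume n: "1 \<le> n"
  have "bil n P u (\<lambda>k. bvec n k * c) = (\<Sum>j=1..n. \<Sum>k=1..n. (u j * P j k) * (bvec n k * c))"
    unfolding bil_def ..
  also have "\<dots> = (\<Sum>j=1..n. u j * P j n * c)" using sum_bvec[OF n] by simp
  finally show ?thesis by (simp add: sum_distrib_left algebra_simps)
qed

lemma bil_bvec_l: "1 \<le> n \<Longrightarrow> bil n P (\<lambda>k. bvec n k * c) u = c * (\<Sum>j=1..n. P n j * u j)"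
proof -
  assume n: "1 \<le> n"
  have "bil n P (\<lambda>k. bvec n k * c) u = (\<Sum>k=1..n. bvec n k * c * (\<Sum>j=1..n. P k j * u j))"
    unfolding bil_def by (simp add: sum_distrib_left mult.assoc)
  also have "\<dots> = c * (\<Sum>j=1..n. P n j * u j)" using sum_bvec2[OF n] .
  finally show ?thesis .
qed

lemma quad_bvec: "1 \<le> n \<Longrightarrow> quadform n P (\<lambda>k. bvec n k * c) = c^2 * P n n"
proof -
  assume n: "1 \<le> n"
  have "quadform n P (\<lambda>k. bvec n k * c) = c * (\<Sum>j=1..n. P n j * (bvec n j * c))"
    unfolding quadform_bil by (rule bil_bvec_l[OF n])
  also have "\<dots> = c^2 * P n n" using sum_bvec[OF n, of "\<lambda>j. P n j" c] by (simp add: power2_eq_square)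
  finally show ?thesis .
qed

lemma matvec_A: "1 \<le> i \<Longrightarrow> matvec n (Amat n) p i = (if i < n then p (Suc i) else 0)"
  unfolding matvec_def Amat_def by (auto simp: if_distrib if_distribR cong: if_cong)




definition Rfun where "Rfun n F G h Fb Gb P Q = (\<lambda>x \<nu>. let \<Phi> = (\<lambda>y. (\<lambda>i. y i + quadform n (P i) y));
                            x' = sys_map n Fb Gb (\<lambda>_. 0) x \<nu>
                        in (\<lambda>i. \<Phi> x' i - sys_map n F G h (\<Phi> x) (\<nu> - quadform n Q x) i))"

lemma quad_equiv_Rfun: "quad_equiv n F G h Fb Gb (\<lambda>_. 0) \<longleftrightarrow>
  (\<exists>P Q. (\<forall>i\<in>{1..n}. symm n (P i)) \<and> symm n Q \<and> is_O3 n (Rfun n F G h Fb Gb P Q))"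
  unfolding quad_equiv_def Rfun_def ..

definition Smat where "Smat n F Fb P Q i = (\<lambda>a b. Fb i a b + Lop n (P i) a b
   - (if i < n then P (Suc i) else (\<lambda>_ _. 0)) a b + (if i = n then Q else (\<lambda>_ _. 0)) a b - F i a b)"

definition D2 where "D2 n F G h Fb Gb P Q x \<nu> i = quadform n (Smat n F Fb P Q i) x
   + \<nu> * (matvec n Gb x i + 2 * matvec n (mmul n (P i) (Amat n)) x n - matvec n G x i)
   + \<nu>^2 * (P i n n - h i)"

definition Efun where "Efun n F G h Fb Gb P Q x \<nu> i =
  (let l = (\<lambda>j. matvec n (Amat n) x j + bvec n j * \<nu>);
       q = (\<lambda>j. quadform n (Fb j) x + matvec n Gb x j * \<nu>);
       p = (\<lambda>j. quadform n (P j) x);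
       qQ = quadform n Q x;
       \<mu> = \<nu> - qQ
   in bil n (P i) l q + bil n (P i) q l + quadform n (P i) q
      - (bil n (F i) x p + bil n (F i) p x + quadform n (F i) p)
      + matvec n G x i * qQ - matvec n G p i * \<mu> - h i * (\<mu>^2 - \<nu>^2))"

lemma R_eq:
  assumes n: "1 \<le> n" and sP: "\<forall>i\<in>{1..n}. symm n (P i)" and i: "i \<in> {1..n}"
  shows "Rfun n F G h Fb Gb P Q x \<nu> i = D2 n F G h Fb Gb P Q x \<nu> i + Efun n F G h Fb Gb P Q x \<nu> i"
proof -
  define l where "l = (\<lambda>j. matvec n (Amat n) x j + bvec n j * \<nu>)"
  define q where "q = (\<lambda>j. quadform n (Fb j) x + matvec n Gb x j * \<nu>)"
  define p where "p = (\<lambda>j. quadform n (P j) x)"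
  define qQ where "qQ = quadform n Q x"
  define Ax where "Ax = matvec n (Amat n) x"
  have x': "sys_map n Fb Gb (\<lambda>_. 0) x \<nu> = (\<lambda>j. l j + q j)"
    unfolding sys_map_def l_def q_def by (simp add: algebra_simps)
  have R: "Rfun n F G h Fb Gb P Q x \<nu> i = l i + q i + quadform n (P i) (\<lambda>j. l j + q j)
     - (matvec n (Amat n) (\<lambda>j. x j + p j) i + bvec n i * (\<nu> - qQ) + quadform n (F i) (\<lambda>j. x j + p j)
        + matvec n G (\<lambda>j. x j + p j) i * (\<nu> - qQ) + h i * (\<nu> - qQ)^2)"
    unfolding Rfun_def Let_def x' p_def qQ_def by (simp add: sys_map_def)
  have symP: "\<forall>j\<in>{1..n}. P i j n = P i n j" using sP i n unfolding symm_def by auto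
  have cross: "bil n (P i) Ax (\<lambda>k. bvec n k * \<nu>) + bil n (P i) (\<lambda>k. bvec n k * \<nu>) Ax
      = \<nu> * (2 * matvec n (mmul n (P i) (Amat n)) x n)"
  proof -
    have "(\<Sum>j=1..n. Ax j * P i j n) = (\<Sum>j=1..n. P i n j * Ax j)"
      by (rule sum.cong) (auto simp: symP)
    moreover have "(\<Sum>j=1..n. P i n j * Ax j) = matvec n (mmul n (P i) (Amat n)) x n"
      unfolding Ax_def matvec_mmul[symmetric] by (simp add: matvec_def[of n "P i"])
    ultimately show ?thesis using bil_bvec_r[OF n] bil_bvec_l[OF n] by simp
  qed
  have lq: "quadform n (P i) l = quadform n (Lop n (P i)) x + \<nu> * (2 * matvec n (mmul n (P i) (Amat n)) x n) + \<nu>^2 * P i n n"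
  proof -
    have "l = (\<lambda>j. Ax j + bvec n j * \<nu>)" unfolding l_def Ax_def ..
    then have "quadform n (P i) l = quadform n (P i) Ax + (bil n (P i) Ax (\<lambda>k. bvec n k * \<nu>) + bil n (P i) (\<lambda>k. bvec n k * \<nu>) Ax)
       + quadform n (P i) (\<lambda>k. bvec n k * \<nu>)" by (simp add: quadform_add)
    then show ?thesis using cross unfolding quad_bvec[OF n] by (simp add: Ax_def quadform_matvec Lop_def)
  qed
  have Ap: "matvec n (Amat n) p i = quadform n (if i < n then P (Suc i) else (\<lambda>_ _. 0)) x"
    using i by (simp add: matvec_A p_def quadform_zero)
  have bQ: "bvec n i * qQ = quadform n (if i = n then Q else (\<lambda>_ _. 0)) x"
    by (simp add: bvec_def qQ_def quadform_zero)
  have S: "quadform n (Smat n F Fb P Q i) x = quadform n (Fb i) x + quadform n (Lop n (P i)) x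
     - matvec n (Amat n) p i + bvec n i * qQ - quadform n (F i) x"
    unfolding Smat_def Ap bQ by (simp add: quadform_madd quadform_msub)
  have li: "l i = matvec n (Amat n) x i + bvec n i * \<nu>" unfolding l_def ..
  have qi: "q i = quadform n (Fb i) x + matvec n Gb x i * \<nu>" unfolding q_def ..
  show ?thesis
    unfolding R D2_def Efun_def Let_def S
    unfolding l_def[symmetric] q_def[symmetric] p_def[symmetric] qQ_def[symmetric]
    using lq unfolding quadform_add matvec_add li qi
    by (simp add: algebra_simps power2_eq_square)
qed




lemma ord_l: "\<forall>j\<in>{1..n}. ordk n 1 (\<lambda>x \<nu>. (\<lambda>j. matvec n (Amat n) x j + bvec n j * \<nu>) j)"
proof
  fix j assume "j \<in> {1..n}"
  have x: "\<forall>j\<in>{1..n}. ordk n 1 (\<lambda>x \<nu>. x j)" using ord_x by blast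
  have "ordk n 1 (\<lambda>x \<nu>. matvec n (Amat n) x j)" using ord_matvec[OF x] .
  moreover have "ordk n 1 (\<lambda>x \<nu>. bvec n j * \<nu>)" by (rule ord_mult[OF ord_const ord_nu]) simp
  ultimately show "ordk n 1 (\<lambda>x \<nu>. (\<lambda>j. matvec n (Amat n) x j + bvec n j * \<nu>) j)"
    by (simp add: ord_add)
qed

lemma ord_xv: "\<forall>j\<in>{1..n}. ordk n 1 (\<lambda>x \<nu>. x j)" using ord_x by blast

lemma ord_qf: "ordk n 2 (\<lambda>x \<nu>. quadform n M x)"
  using ord_quad[OF ord_xv, of 2 n M] by simp

lemma ord_q: "\<forall>j\<in>{1..n}. ordk n 2 (\<lambda>x \<nu>. (\<lambda>j. quadform n (Fb j) x + matvec n Gb x j * \<nu>) j)"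
proof
  fix j assume "j \<in> {1..n}"
  have "ordk n 1 (\<lambda>x \<nu>. matvec n Gb x j)" using ord_matvec[OF ord_xv] .
  then have "ordk n 2 (\<lambda>x \<nu>. matvec n Gb x j * \<nu>)" by (rule ord_mult[OF _ ord_nu]) simp
  then show "ordk n 2 (\<lambda>x \<nu>. (\<lambda>j. quadform n (Fb j) x + matvec n Gb x j * \<nu>) j)"
    by (simp add: ord_add ord_qf)
qed

lemma ord_p: "\<forall>j\<in>{1..n}. ordk n 2 (\<lambda>x \<nu>. (\<lambda>j. quadform n (P j) x) j)"
  by (simp add: ord_qf)

lemma E_ord: "ordk n 3 (\<lambda>x \<nu>. Efun n F G h Fb Gb P Q x \<nu> i)"
proof -
  define l where "l = (\<lambda>x \<nu>. (\<lambda>j. matvec n (Amat n) x j + bvec n j * \<nu>))"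
  define q where "q = (\<lambda>x (\<nu>::real). (\<lambda>j. quadform n (Fb j) x + matvec n Gb x j * \<nu>))"
  define p where "p = (\<lambda>x (\<nu>::real). (\<lambda>j. quadform n (P j) x))"
  have ol: "\<forall>j\<in>{1..n}. ordk n 1 (\<lambda>x \<nu>. l x \<nu> j)" using ord_l unfolding l_def .
  have oq: "\<forall>j\<in>{1..n}. ordk n 2 (\<lambda>x \<nu>. q x \<nu> j)" using ord_q unfolding q_def .
  have op: "\<forall>j\<in>{1..n}. ordk n 2 (\<lambda>x \<nu>. p x \<nu> j)" using ord_p unfolding p_def .
  have t1: "ordk n 3 (\<lambda>x \<nu>. bil n (P i) (l x \<nu>) (q x \<nu>))" by (rule ord_bil[OF ol oq]) simp
  have t2: "ordk n 3 (\<lambda>x \<nu>. bil n (P i) (q x \<nu>) (l x \<nu>))" by (rule ord_bil[OF oq ol]) simp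
  have t3: "ordk n 3 (\<lambda>x \<nu>. quadform n (P i) (q x \<nu>))" by (rule ord_mono[OF ord_quad[OF oq refl]]) simp
  have t4: "ordk n 3 (\<lambda>x \<nu>. bil n (F i) x (p x \<nu>))" by (rule ord_bil[OF ord_xv op]) simp
  have t5: "ordk n 3 (\<lambda>x \<nu>. bil n (F i) (p x \<nu>) x)" by (rule ord_bil[OF op ord_xv]) simp
  have t6: "ordk n 3 (\<lambda>x \<nu>. quadform n (F i) (p x \<nu>))" by (rule ord_mono[OF ord_quad[OF op refl]]) simp
  have t7: "ordk n 3 (\<lambda>x \<nu>. matvec n G x i * quadform n Q x)"
    by (rule ord_mult[OF ord_matvec[OF ord_xv] ord_qf]) simp
  have mu: "ordk n 1 (\<lambda>x \<nu>. \<nu> - quadform n Q x)"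
    by (rule ord_diff[OF ord_nu ord_mono[OF ord_qf]]) simp
  have t8: "ordk n 3 (\<lambda>x \<nu>. matvec n G (p x \<nu>) i * (\<nu> - quadform n Q x))"
    by (rule ord_mult[OF ord_matvec[OF op] mu]) simp
  have t9a: "ordk n 3 (\<lambda>x \<nu>. quadform n Q x * quadform n Q x)"
    by (rule ord_mono[OF ord_mult[OF ord_qf ord_qf refl]]) simp
  have t9b: "ordk n 3 (\<lambda>x \<nu>. 2 * \<nu> * quadform n Q x)"
    by (rule ord_mult[OF ord_mult[OF ord_const ord_nu refl] ord_qf]) simp
  have t9: "ordk n 3 (\<lambda>x \<nu>. h i * ((\<nu> - quadform n Q x)^2 - \<nu>^2))"
  proof -
    have "ordk n 3 (\<lambda>x \<nu>. h i * (quadform n Q x * quadform n Q x - 2 * \<nu> * quadform n Q x))"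
      by (rule ord_mult[OF ord_const ord_diff[OF t9a t9b]]) simp
    then show ?thesis by (simp add: power2_eq_square algebra_simps)
  qed
  have "ordk n 3 (\<lambda>x \<nu>. bil n (P i) (l x \<nu>) (q x \<nu>) + bil n (P i) (q x \<nu>) (l x \<nu>) + quadform n (P i) (q x \<nu>)
      - (bil n (F i) x (p x \<nu>) + bil n (F i) (p x \<nu>) x + quadform n (F i) (p x \<nu>))
      + matvec n G x i * quadform n Q x - matvec n G (p x \<nu>) i * (\<nu> - quadform n Q x) - h i * ((\<nu> - quadform n Q x)^2 - \<nu>^2))"
    by (intro ord_add ord_diff t1 t2 t3 t4 t5 t6 t7 t8 t9)
  then show ?thesis unfolding Efun_def Let_def l_def q_def p_def .
qed




lemma ord_unif:
  assumes "\<forall>i\<in>{1..n}. ordk n k (\<lambda>x \<nu>. g i x \<nu>)"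
  shows "\<exists>C. \<forall>x \<nu>. sz n x \<nu> \<le> 1 \<longrightarrow> (\<forall>i\<in>{1..n}. \<bar>g i x \<nu>\<bar> \<le> C * sz n x \<nu> ^ k)"
proof -
  have "ordk n k (\<lambda>x \<nu>. \<Sum>i\<in>{1..n}. \<bar>g i x \<nu>\<bar>)"
    by (rule ord_sum) (use assms ord_abs in auto)
  then obtain C where C: "\<forall>x \<nu>. sz n x \<nu> \<le> 1 \<longrightarrow> \<bar>\<Sum>i\<in>{1..n}. \<bar>g i x \<nu>\<bar>\<bar> \<le> C * sz n x \<nu> ^ k"
    unfolding ordk_def by blast
  show ?thesis
  proof (intro exI[of _ C] allI impI ballI)
    fix x \<nu> i assume s: "sz n x \<nu> \<le> 1" and i: "i \<in> {1..n}"
    have "\<bar>g i x \<nu>\<bar> \<le> (\<Sum>i\<in>{1..n}. \<bar>g i x \<nu>\<bar>)"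
      by (rule member_le_sum[of i _ "\<lambda>i. \<bar>g i x \<nu>\<bar>"]) (use i in auto)
    also have "\<dots> \<le> C * sz n x \<nu> ^ k" using C s by (simp add: sum_nonneg)
    finally show "\<bar>g i x \<nu>\<bar> \<le> C * sz n x \<nu> ^ k" .
  qed
qed

lemma O3_of_D2:
  assumes n: "1 \<le> n" and sP: "\<forall>i\<in>{1..n}. symm n (P i)"
    and D: "\<forall>i\<in>{1..n}. \<forall>x \<nu>. D2 n F G h Fb Gb P Q x \<nu> i = 0"
  shows "is_O3 n (Rfun n F G h Fb Gb P Q)"
proof -
  obtain C where C: "\<forall>x \<nu>. sz n x \<nu> \<le> 1 \<longrightarrow> (\<forall>i\<in>{1..n}. \<bar>Efun n F G h Fb Gb P Q x \<nu> i\<bar> \<le> C * sz n x \<nu> ^ 3)"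
    using ord_unif[of n 3 "\<lambda>i x \<nu>. Efun n F G h Fb Gb P Q x \<nu> i"] E_ord by blast
  have "\<forall>x \<nu>. (\<Sum>j = 1..n. \<bar>x j\<bar>) + \<bar>\<nu>\<bar> < 1 \<longrightarrow> (\<forall>i\<in>{1..n}. \<bar>Rfun n F G h Fb Gb P Q x \<nu> i\<bar> \<le> C * ((\<Sum>j = 1..n. \<bar>x j\<bar>) + \<bar>\<nu>\<bar>) ^ 3)"
  proof (intro allI impI ballI)
    fix x :: "nat \<Rightarrow> real" and \<nu> :: real and i assume s: "(\<Sum>j = 1..n. \<bar>x j\<bar>) + \<bar>\<nu>\<bar> < 1" and i: "i \<in> {1..n}"
    have "Rfun n F G h Fb Gb P Q x \<nu> i = Efun n F G h Fb Gb P Q x \<nu> i"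
      using R_eq[OF n sP i] D i by simp
    then show "\<bar>Rfun n F G h Fb Gb P Q x \<nu> i\<bar> \<le> C * ((\<Sum>j = 1..n. \<bar>x j\<bar>) + \<bar>\<nu>\<bar>) ^ 3"
    proof -
      have "sz n x \<nu> \<le> 1" using s unfolding sz_def by simp
      then have "\<bar>Efun n F G h Fb Gb P Q x \<nu> i\<bar> \<le> C * sz n x \<nu> ^ 3" using C i by blast
      then show ?thesis using \<open>Rfun n F G h Fb Gb P Q x \<nu> i = Efun n F G h Fb Gb P Q x \<nu> i\<close> unfolding sz_def by simp
    qed
  qed
  then show ?thesis unfolding is_O3_def by (intro exI[of _ C] exI[of _ 1]) simp
qed

lemma quadform_scale: "quadform n M (\<lambda>j. t * x j) = t^2 * quadform n M x"
  unfolding quadform_def by (simp add: sum_distrib_left power2_eq_square algebra_simps)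

lemma matvec_scale: "matvec n M (\<lambda>j. t * x j) i = t * matvec n M x i"
  unfolding matvec_def by (simp add: sum_distrib_left algebra_simps)

lemma D2_scale: "D2 n F G h Fb Gb P Q (\<lambda>j. t * x j) (t * \<nu>) i = t^2 * D2 n F G h Fb Gb P Q x \<nu> i"
  unfolding D2_def quadform_scale matvec_scale by (simp add: power2_eq_square algebra_simps)

lemma sz_scale: "sz n (\<lambda>j. t * x j) (t * \<nu>) = \<bar>t\<bar> * sz n x \<nu>"
  unfolding sz_def by (simp add: abs_mult sum_distrib_left algebra_simps)

lemma D2_of_O3:
  assumes n: "1 \<le> n" and sP: "\<forall>i\<in>{1..n}. symm n (P i)"
    and O: "is_O3 n (Rfun n F G h Fb Gb P Q)" and i: "i \<in> {1..n}"
  shows "D2 n F G h Fb Gb P Q x \<nu> i = 0"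
proof -
  obtain C0 \<delta> where d: "\<delta> > 0" and C0: "\<forall>x \<nu>. sz n x \<nu> < \<delta> \<longrightarrow> \<bar>Rfun n F G h Fb Gb P Q x \<nu> i\<bar> \<le> C0 * sz n x \<nu> ^ 3"
    using O i unfolding is_O3_def sz_def by blast
  obtain C1 where C1: "\<forall>x \<nu>. sz n x \<nu> \<le> 1 \<longrightarrow> \<bar>Efun n F G h Fb Gb P Q x \<nu> i\<bar> \<le> C1 * sz n x \<nu> ^ 3"
    using E_ord[of n F G h Fb Gb P Q i] unfolding ordk_def by blast
  define d' where "d' = min \<delta> 1"
  have d': "d' > 0" "d' \<le> 1" "d' \<le> \<delta>" using d unfolding d'_def by auto
  have bound: "\<bar>D2 n F G h Fb Gb P Q y w i\<bar> \<le> (C0 + C1) * sz n y w ^ 3" if "sz n y w < d'" for y w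
  proof -
    have "D2 n F G h Fb Gb P Q y w i = Rfun n F G h Fb Gb P Q y w i - Efun n F G h Fb Gb P Q y w i"
      using R_eq[OF n sP i] by simp
    moreover have "\<bar>Rfun n F G h Fb Gb P Q y w i\<bar> \<le> C0 * sz n y w ^ 3" using C0 that d' by auto
    moreover have "\<bar>Efun n F G h Fb Gb P Q y w i\<bar> \<le> C1 * sz n y w ^ 3" using C1 that d' by auto
    ultimately show ?thesis by (simp add: algebra_simps)
  qed
  define s where "s = sz n x \<nu>"
  have s0: "s \<ge> 0" unfolding s_def by (rule sz_nonneg)
  define e where "e = \<bar>D2 n F G h Fb Gb P Q x \<nu> i\<bar>"
  show ?thesis
  proof (rule ccontr)
    assume "D2 n F G h Fb Gb P Q x \<nu> i \<noteq> 0"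
    then have e: "e > 0" unfolding e_def by simp
    define K where "K = \<bar>C0 + C1\<bar> * s^3 + 1"
    have K: "K > 0" unfolding K_def using s0 by (simp add: add_nonneg_pos)
    define t where "t = min (d' / (2 * (s + 1))) (e / (2 * K))"
    have t0: "t > 0" unfolding t_def using d' e K s0 by simp
    have ts: "t * s < d'"
    proof -
      have "t \<le> d' / (2 * (s + 1))" unfolding t_def by simp
      then have "t * s \<le> d' / (2 * (s + 1)) * s" using s0 by (rule mult_right_mono)
      also have "\<dots> < d'" proof -
        have "0 \<le> d' * s" using d' s0 by simp
        then have "0 < d' * s + d' * 2" using d' by linarith
        then show ?thesis using d' s0 by (simp add: field_simps)
      qed
      finally show ?thesis .
    qed
    have "sz n (\<lambda>j. t * x j) (t * \<nu>) < d'" using ts t0 by (simp add: sz_scale s_def)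
    from bound[OF this]
    have "\<bar>D2 n F G h Fb Gb P Q (\<lambda>j. t * x j) (t * \<nu>) i\<bar> \<le> (C0 + C1) * sz n (\<lambda>j. t * x j) (t * \<nu>) ^ 3" .
    then have "t^2 * e \<le> (C0 + C1) * (t * s)^3"
      unfolding D2_scale sz_scale e_def s_def using t0 by (simp add: abs_mult)
    also have "\<dots> \<le> \<bar>C0 + C1\<bar> * s^3 * t^3"
    proof -
      have "(C0 + C1) * (s^3 * t^3) \<le> \<bar>C0 + C1\<bar> * (s^3 * t^3)"
        by (rule mult_right_mono) (use s0 t0 in auto)
      then show ?thesis by (simp add: power_mult_distrib ac_simps)
    qed
    also have "\<dots> < K * t^3" unfolding K_def using t0 by simp
    finally have "t^2 * e < t^2 * (K * t)" by (simp add: power3_eq_cube power2_eq_square algebra_simps)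
    then have "e < K * t" using t0 by simp
    moreover have "K * t \<le> e / 2"
    proof -
      have "t \<le> e / (2 * K)" unfolding t_def by simp
      then show ?thesis using K by (simp add: field_simps)
    qed
    ultimately show False using e by simp
  qed
qed




lemma mmulA_entry: "mmul n P (Amat n) a b = (if 2 \<le> b \<and> b \<le> n then P a (b - 1) else 0)"
proof (cases "2 \<le> b \<and> b \<le> n")
  case True
  have "mmul n P (Amat n) a b = (\<Sum>l=1..n. if l = b - 1 then P a l else 0)"
    unfolding mmul_def Amat_def by (rule sum.cong) (use True in auto)
  also have "\<dots> = P a (b - 1)" using True by auto
  finally show ?thesis using True by simp
next
  case False
  have "mmul n P (Amat n) a b = (\<Sum>l=1..n. 0)"
    unfolding mmul_def Amat_def by (rule sum.cong) (use False in auto)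
  then show ?thesis using False by auto
qed

lemma mmulAT_entry: "mmul n (mtrans (Amat n)) M a c = (if 2 \<le> a \<and> a \<le> n then M (a - 1) c else 0)"
proof (cases "2 \<le> a \<and> a \<le> n")
  case True
  have "mmul n (mtrans (Amat n)) M a c = (\<Sum>l=1..n. if l = a - 1 then M l c else 0)"
    unfolding mmul_def Amat_def mtrans_def by (rule sum.cong) (use True in auto)
  also have "\<dots> = M (a - 1) c" using True by auto
  finally show ?thesis using True by simp
next
  case False
  have "mmul n (mtrans (Amat n)) M a c = (\<Sum>l=1..n. 0)"
    unfolding mmul_def Amat_def mtrans_def by (rule sum.cong) (use False in auto)
  then show ?thesis using False by auto
qed

lemma Lop_entry: "Lop n P a b = (if 2 \<le> a \<and> a \<le> n \<and> 2 \<le> b \<and> b \<le> n then P (a - 1) (b - 1) else 0)"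
  unfolding Lop_def mmulAT_entry mmulA_entry by auto

lemma Lop_pow: "a \<in> {1..n} \<Longrightarrow> b \<in> {1..n} \<Longrightarrow>
   (Lop n ^^ s) P a b = (if s < a \<and> s < b then P (a - s) (b - s) else 0)"
proof (induction s arbitrary: a b)
  case 0 then show ?case by simp
next
  case (Suc s)
  show ?case
  proof (cases "2 \<le> a \<and> 2 \<le> b")
    case True
    have "(Lop n ^^ Suc s) P a b = (Lop n ^^ s) P (a - 1) (b - 1)"
      using True Suc.prems by (simp add: Lop_entry)
    also have "\<dots> = (if s < a - 1 \<and> s < b - 1 then P (a - 1 - s) (b - 1 - s) else 0)"
    proof -
      have "a - 1 \<in> {1..n}" "b - 1 \<in> {1..n}" using True Suc.prems by auto
      from Suc.IH[OF this] show ?thesis .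
    qed
    finally show ?thesis using True by (auto simp: diff_diff_add)
  next
    case False
    then show ?thesis by (auto simp: Lop_entry)
  qed
qed

lemma ATpow: "a \<in> {1..n} \<Longrightarrow>
   ((\<lambda>M. mmul n (mtrans (Amat n)) M) ^^ m) Z a c = (if m < a then Z (a - m) c else 0)"
proof (induction m arbitrary: a)
  case 0 then show ?case by simp
next
  case (Suc m)
  show ?case
  proof (cases "2 \<le> a")
    case True
    have "((\<lambda>M. mmul n (mtrans (Amat n)) M) ^^ Suc m) Z a c = ((\<lambda>M. mmul n (mtrans (Amat n)) M) ^^ m) Z (a - 1) c"
      using True Suc.prems by (simp add: mmulAT_entry)
    also have "\<dots> = (if m < a - 1 then Z (a - 1 - m) c else 0)"
    proof -
      have "a - 1 \<in> {1..n}" using True Suc.prems by auto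
      from Suc.IH[OF this] show ?thesis .
    qed
    finally show ?thesis using True by (auto simp: diff_diff_add)
  next
    case False
    then show ?thesis using Suc.prems by (auto simp: mmulAT_entry)
  qed
qed

lemma Xop_entry: "a \<in> {1..n} \<Longrightarrow> Xop n m P a c = (if m < a then (Lop n ^^ (a - 1 - m)) P n c else 0)"
  unfolding Xop_def using ATpow[of a n m "X0 n P" c] by (simp add: X0_def diff_diff_add add.commute)

lemma Mmat_entry:
  assumes i: "i \<in> {1..n}" and k: "k \<in> {1..n}"
  shows "Mmat n F G i k = (if 2 \<le> k then (\<Sum>m=1..i-1. (Lop n ^^ (i - 1 - m)) (F m) n (k - 1)) else 0) + G i k / 2"
proof -
  have "(\<Sum>m=1..n-1. mmul n (Xop n m (F m)) (Amat n) i k)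
      = (\<Sum>m=1..n-1. if m \<le> i - 1 then (if 2 \<le> k then (Lop n ^^ (i - 1 - m)) (F m) n (k - 1) else 0) else 0)"
    by (rule sum.cong) (use i k in \<open>auto simp: mmulA_entry Xop_entry\<close>)
  also have "\<dots> = (\<Sum>m=1..i-1. (if 2 \<le> k then (Lop n ^^ (i - 1 - m)) (F m) n (k - 1) else 0))"
  proof -
    have sub: "{1..i-1} \<subseteq> {1..n-1}" using i by auto
    have "(\<Sum>m=1..n-1. if m \<le> i - 1 then (if 2 \<le> k then (Lop n ^^ (i - 1 - m)) (F m) n (k - 1) else 0) else 0)
        = (\<Sum>m\<in>{1..n-1} \<inter> {m. m \<le> i - 1}. (if 2 \<le> k then (Lop n ^^ (i - 1 - m)) (F m) n (k - 1) else 0))"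
      by (simp add: sum.inter_restrict)
    also have "{1..n-1} \<inter> {m. m \<le> i - 1} = {1..i-1}" using i by auto
    finally show ?thesis .
  qed
  finally show ?thesis unfolding Mmat_def by (cases "2 \<le> k") simp_all
qed




lemma Lop_pow_Suc: "a \<le> n \<Longrightarrow> b \<le> n \<Longrightarrow>
  (Lop n ^^ Suc s) X a b = (if 2 \<le> a \<and> 2 \<le> b then (Lop n ^^ s) X (a - 1) (b - 1) else 0)"
  by (simp add: Lop_entry)

lemma P_closed:
  assumes rec: "\<forall>m. 1 \<le> m \<and> m < n \<longrightarrow> (\<forall>a\<in>{1..n}. \<forall>b\<in>{1..n}. P (Suc m) a b = Lop n (P m) a b - C m a b)"
  shows "Suc j \<le> n \<Longrightarrow> a \<in> {1..n} \<Longrightarrow> b \<in> {1..n} \<Longrightarrow>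
    P (Suc j) a b = (Lop n ^^ j) (P 1) a b - (\<Sum>m=1..j. (Lop n ^^ (j - m)) (C m) a b)"
proof (induction j arbitrary: a b)
  case 0 then show ?case by simp
next
  case (Suc j)
  have step: "P (Suc (Suc j)) a b = Lop n (P (Suc j)) a b - C (Suc j) a b"
    using rec Suc.prems by auto
  have split: "(\<Sum>m=1..Suc j. (Lop n ^^ (Suc j - m)) (C m) a b)
      = (\<Sum>m=1..j. (Lop n ^^ Suc (j - m)) (C m) a b) + C (Suc j) a b"
  proof -
    have "(\<Sum>m=1..Suc j. (Lop n ^^ (Suc j - m)) (C m) a b) = (\<Sum>m=1..j. (Lop n ^^ (Suc j - m)) (C m) a b) + C (Suc j) a b"
      by simp
    also have "(\<Sum>m=1..j. (Lop n ^^ (Suc j - m)) (C m) a b) = (\<Sum>m=1..j. (Lop n ^^ Suc (j - m)) (C m) a b)"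
      by (rule sum.cong) (auto simp: Suc_diff_le)
    finally show ?thesis .
  qed
  show ?case
  proof (cases "2 \<le> a \<and> 2 \<le> b")
    case True
    have ab: "a - 1 \<in> {1..n}" "b - 1 \<in> {1..n}" using True Suc.prems by auto
    have "Lop n (P (Suc j)) a b = P (Suc j) (a - 1) (b - 1)" using True Suc.prems by (simp add: Lop_entry)
    also have "\<dots> = (Lop n ^^ j) (P 1) (a - 1) (b - 1) - (\<Sum>m=1..j. (Lop n ^^ (j - m)) (C m) (a - 1) (b - 1))"
      using Suc.IH[OF _ ab] Suc.prems by simp
    finally have L: "Lop n (P (Suc j)) a b = \<dots>" .
    have "(\<Sum>m=1..j. (Lop n ^^ Suc (j - m)) (C m) a b) = (\<Sum>m=1..j. (Lop n ^^ (j - m)) (C m) (a - 1) (b - 1))"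
      by (rule sum.cong) (use True Suc.prems in \<open>auto simp: Lop_entry\<close>)
    moreover have "(Lop n ^^ Suc j) (P 1) a b = (Lop n ^^ j) (P 1) (a - 1) (b - 1)"
      using True Suc.prems by (auto simp: Lop_entry)
    ultimately show ?thesis using step L split by simp
  next
    case False
    have "Lop n (P (Suc j)) a b = 0" using False by (auto simp: Lop_entry)
    moreover have "(\<Sum>m=1..j. (Lop n ^^ Suc (j - m)) (C m) a b) = 0"
      by (rule sum.neutral) (use False Suc.prems in \<open>auto simp: Lop_entry\<close>)
    moreover have "(Lop n ^^ Suc j) (P 1) a b = 0"
      using False Suc.prems by (auto simp: Lop_entry)
    ultimately show ?thesis using step split by simp
  qed
qed

lemma P_closed':
  assumes rec: "\<forall>m. 1 \<le> m \<and> m < n \<longrightarrow> (\<forall>a\<in>{1..n}. \<forall>b\<in>{1..n}. P (Suc m) a b = Lop n (P m) a b - C m a b)"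
    and i: "i \<in> {1..n}" and a: "a \<in> {1..n}" and b: "b \<in> {1..n}"
  shows "P i a b = (Lop n ^^ (i - 1)) (P 1) a b - (\<Sum>m=1..i-1. (Lop n ^^ (i - 1 - m)) (C m) a b)"
  using P_closed[OF rec, of "i - 1" a b] i a b by simp




definition ev :: "nat \<Rightarrow> nat \<Rightarrow> real" where "ev j = (\<lambda>a. if a = j then 1 else 0)"

lemma sum_ev: "b \<in> {1..n} \<Longrightarrow> (\<Sum>k=1..n. X k * ev b k) = X b"
proof -
  assume b: "b \<in> {1..n}"
  have "(\<Sum>k=1..n. X k * ev b k) = (\<Sum>k\<in>{1..n}. if k = b then X k else 0)"
    by (rule sum.cong) (simp_all add: ev_def)
  also have "\<dots> = X b" using b by (simp add: sum.delta)
  finally show ?thesis .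
qed

lemma sum_ev': "b \<in> {1..n} \<Longrightarrow> (\<Sum>k=1..n. ev b k * X k) = X b"
  using sum_ev[of b n X] by (simp add: mult.commute)

lemma bil_e: "a \<in> {1..n} \<Longrightarrow> b \<in> {1..n} \<Longrightarrow> bil n S (ev a) (ev b) = S a b"
proof -
  assume a: "a \<in> {1..n}" and b: "b \<in> {1..n}"
  have "bil n S (ev a) (ev b) = (\<Sum>j=1..n. ev a j * S j b)"
    unfolding bil_def by (rule sum.cong[OF refl]) (rule sum_ev[OF b])
  also have "\<dots> = S a b" by (rule sum_ev'[OF a])
  finally show ?thesis .
qed

lemma matvec_e: "k \<in> {1..n} \<Longrightarrow> matvec n M (ev k) i = M i k"
  unfolding matvec_def ev_def by (simp add: if_distrib if_distribR cong: if_cong)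

lemma symm_quad_zero:
  assumes S: "symm n S" and Z: "\<forall>x. quadform n S x = 0" and a: "a \<in> {1..n}" and b: "b \<in> {1..n}"
  shows "S a b = 0"
proof -
  have e1: "quadform n S (\<lambda>t. ev a t + ev b t) = quadform n S (ev a) + bil n S (ev a) (ev b) + bil n S (ev b) (ev a) + quadform n S (ev b)"
    by (rule quadform_add)
  have z1: "quadform n S (\<lambda>t. ev a t + ev b t) = 0" using Z by (rule spec)
  have z2: "quadform n S (ev a) = 0" using Z by (rule spec)
  have z3: "quadform n S (ev b) = 0" using Z by (rule spec)
  have q1: "quadform n S (ev a) = S a a" unfolding quadform_bil by (rule bil_e[OF a a])
  have q2: "quadform n S (ev b) = S b b" unfolding quadform_bil by (rule bil_e[OF b b])
  have b1: "bil n S (ev a) (ev b) = S a b" by (rule bil_e[OF a b])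
  have b2: "bil n S (ev b) (ev a) = S b a" by (rule bil_e[OF b a])
  have sy: "S b a = S a b" using S a b unfolding symm_def by blast
  from e1 z1 z2 z3 q1 q2 b1 b2 sy show ?thesis by linarith
qed

lemma matvec_zero: "matvec n M (\<lambda>_. 0) i = 0" unfolding matvec_def by simp

lemma quadform_zerov: "quadform n M (\<lambda>_. 0) = 0" unfolding quadform_def by simp

lemma D2_extract:
  assumes D: "\<forall>x \<nu>. D2 n F G h Fb Gb P Q x \<nu> i = 0" and S: "symm n (Smat n F Fb P Q i)"
  shows "(\<forall>a\<in>{1..n}. \<forall>b\<in>{1..n}. Smat n F Fb P Q i a b = 0) \<and> P i n n = h i \<and>
     (\<forall>k\<in>{1..n}. Gb i k + 2 * mmul n (P i) (Amat n) n k - G i k = 0)"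
proof (intro conjI ballI)
  have Z: "\<forall>x. quadform n (Smat n F Fb P Q i) x = 0"
  proof
    fix x show "quadform n (Smat n F Fb P Q i) x = 0" using D[rule_format, of x 0] by (simp add: D2_def)
  qed
  fix a b assume "a \<in> {1..n}" "b \<in> {1..n}"
  then show "Smat n F Fb P Q i a b = 0" using symm_quad_zero[OF S Z] by blast
next
  show "P i n n = h i" using D[rule_format, of "\<lambda>_. 0" 1] by (simp add: D2_def matvec_zero quadform_zerov)
  then show "\<And>k. k \<in> {1..n} \<Longrightarrow> Gb i k + 2 * mmul n (P i) (Amat n) n k - G i k = 0"
  proof -
    fix k assume k: "k \<in> {1..n}" and "P i n n = h i"
    have Z: "quadform n (Smat n F Fb P Q i) (ev k) = 0" using D[rule_format, of "ev k" 0] by (simp add: D2_def)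
    show "Gb i k + 2 * mmul n (P i) (Amat n) n k - G i k = 0"
      using D[rule_format, of "ev k" 1] Z \<open>P i n n = h i\<close> k by (simp add: D2_def matvec_e)
  qed
qed

lemma D2_zero:
  assumes S: "\<forall>a\<in>{1..n}. \<forall>b\<in>{1..n}. Smat n F Fb P Q i a b = 0" and H: "P i n n = h i"
    and V: "\<forall>k\<in>{1..n}. Gb i k + 2 * mmul n (P i) (Amat n) n k - G i k = 0"
  shows "D2 n F G h Fb Gb P Q x \<nu> i = 0"
proof -
  have "quadform n (Smat n F Fb P Q i) x = 0" unfolding quadform_def using S by simp
  moreover have "matvec n Gb x i + 2 * matvec n (mmul n (P i) (Amat n)) x n - matvec n G x i
     = (\<Sum>k=1..n. (Gb i k + 2 * mmul n (P i) (Amat n) n k - G i k) * x k)"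
    unfolding matvec_def by (simp add: sum_distrib_left sum.distrib sum_subtractf algebra_simps)
  moreover have "\<dots> = 0" using V by simp
  ultimately show ?thesis unfolding D2_def using H by simp
qed

lemma symm_Lop: assumes "symm n P" shows "symm n (Lop n P)"
  unfolding symm_def
proof (intro ballI)
  fix j k assume j: "j \<in> {1..n}" and k: "k \<in> {1..n}"
  show "Lop n P j k = Lop n P k j"
  proof (cases "2 \<le> j \<and> 2 \<le> k")
    case True
    then have "j - 1 \<in> {1..n}" "k - 1 \<in> {1..n}" using j k by auto
    then have "P (j - 1) (k - 1) = P (k - 1) (j - 1)" using assms unfolding symm_def by blast
    then show ?thesis using True j k by (simp add: Lop_entry)
  next
    case False then show ?thesis by (auto simp: Lop_entry)
  qed
qed

lemma symm_Smat:
  assumes "symm n (Fb i)" "symm n (P i)" "i < n \<Longrightarrow> symm n (P (Suc i))" "symm n Q" "symm n (F i)"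
  shows "symm n (Smat n F Fb P Q i)"
  unfolding symm_def
proof (intro ballI)
  fix a b assume a: "a \<in> {1..n}" and b: "b \<in> {1..n}"
  have 1: "Fb i a b = Fb i b a" using assms(1) a b unfolding symm_def by blast
  have 2: "Lop n (P i) a b = Lop n (P i) b a" using symm_Lop[OF assms(2)] a b unfolding symm_def by blast
  have 3: "(if i < n then P (Suc i) else (\<lambda>_ _. 0)) a b = (if i < n then P (Suc i) else (\<lambda>_ _. 0)) b a"
    using assms(3) a b unfolding symm_def by auto
  have 4: "(if i = n then Q else (\<lambda>_ _. 0)) a b = (if i = n then Q else (\<lambda>_ _. 0)) b a"
    using assms(4) a b unfolding symm_def by auto
  have 5: "F i a b = F i b a" using assms(5) a b unfolding symm_def by blast
  show "Smat n F Fb P Q i a b = Smat n F Fb P Q i b a"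
    unfolding Smat_def using 1 2 3 4 5 by simp
qed




primrec PPs :: "nat \<Rightarrow> (nat \<Rightarrow> nat \<Rightarrow> nat \<Rightarrow> real) \<Rightarrow> (nat \<Rightarrow> nat \<Rightarrow> real) \<Rightarrow> nat \<Rightarrow> nat \<Rightarrow> nat \<Rightarrow> real" where
  "PPs n F P1 0 = P1"
| "PPs n F P1 (Suc j) = (\<lambda>a b. Lop n (PPs n F P1 j) a b - F (Suc j) a b)"

lemma PPs_symm:
  assumes F: "\<forall>i\<in>{1..n}. symm n (F i)" and P1: "symm n P1"
  shows "j < n \<Longrightarrow> symm n (PPs n F P1 j)"
proof (induction j)
  case 0 then show ?case using P1 by simp
next
  case (Suc j)
  have L: "symm n (Lop n (PPs n F P1 j))" using Suc by (intro symm_Lop) simp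
  have FF: "symm n (F (Suc j))" using F Suc.prems by auto
  show ?case using L FF unfolding symm_def by simp
qed

lemma existence:
  assumes n: "1 \<le> n" and F: "\<forall>i\<in>{1..n}. symm n (F i)"
  shows "quad_equiv n F G h (\<lambda>i j k. 0) (\<lambda>j k. 2 * lower_diag (Mmat n F G) j k) (\<lambda>_. 0)"
proof -
  define M where "M = Mmat n F G"
  define T where "T = (\<lambda>i j. if j = n then h i + (\<Sum>m=1..i-1. (Lop n ^^ (i - 1 - m)) (F m) n n) else M i (Suc j))"
  define P1 where "P1 = (\<lambda>r c. if c \<le> r then T (n - r + 1) (c + n - r) else T (n - c + 1) (r + n - c))"
  define P where "P = (\<lambda>i. PPs n F P1 (i - 1))"
  define Q where "Q = (\<lambda>a b. F n a b - Lop n (P n) a b)"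
  define Gb where "Gb = (\<lambda>j k. 2 * lower_diag (Mmat n F G) j k)"
  have sP1: "symm n P1" unfolding symm_def P1_def by auto
  have sP: "\<forall>i\<in>{1..n}. symm n (P i)" unfolding P_def using PPs_symm[OF F sP1] by auto
  have sQ: "symm n Q" using sP n F symm_Lop[of n "P n"] unfolding Q_def symm_def by auto
  have P1eq: "P 1 = P1" unfolding P_def by simp
  have rec: "\<forall>m. 1 \<le> m \<and> m < n \<longrightarrow> (\<forall>a\<in>{1..n}. \<forall>b\<in>{1..n}. P (Suc m) a b = Lop n (P m) a b - F m a b)"
  proof (intro allI impI ballI)
    fix m a b assume m: "1 \<le> m \<and> m < n"
    then obtain m' where "m = Suc m'" by (cases m) auto
    then show "P (Suc m) a b = Lop n (P m) a b - F m a b" unfolding P_def by simp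
  qed
  have closed: "P i a b = (Lop n ^^ (i - 1)) P1 a b - (\<Sum>m=1..i-1. (Lop n ^^ (i - 1 - m)) (F m) a b)"
    if "i \<in> {1..n}" "a \<in> {1..n}" "b \<in> {1..n}" for i a b
    using P_closed'[OF rec that] P1eq by simp
  have D: "\<forall>x \<nu>. D2 n F G h (\<lambda>i j k. 0) Gb P Q x \<nu> i = 0" if i: "i \<in> {1..n}" for i
  proof (intro allI D2_zero ballI)
    fix a b assume a: "a \<in> {1..n}" and b: "b \<in> {1..n}"
    show "Smat n F (\<lambda>i j k. 0) P Q i a b = 0"
    proof (cases "i < n")
      case True
      then show ?thesis using rec i a b unfolding Smat_def by auto
    next
      case False
      then have "i = n" using i by auto
      then show ?thesis unfolding Smat_def Q_def by simp
    qed
  next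
    have nn: "n \<in> {1..n}" using n by auto
    have "P i n n = P1 (n - (i - 1)) (n - (i - 1)) - (\<Sum>m=1..i-1. (Lop n ^^ (i - 1 - m)) (F m) n n)"
      using closed[OF i nn nn] Lop_pow[OF nn nn, of "i - 1" P1] i by auto
    also have "P1 (n - (i - 1)) (n - (i - 1)) = T i n"
    proof -
      have "n - (n - (i - 1)) + 1 = i" "n - (i - 1) + n - (n - (i - 1)) = n" using i by auto
      then show ?thesis unfolding P1_def by simp
    qed
    finally show "P i n n = h i" unfolding T_def by simp
  next
    fix k assume k: "k \<in> {1..n}"
    have nn: "n \<in> {1..n}" using n by auto
    show "Gb i k + 2 * mmul n (P i) (Amat n) n k - G i k = 0"
    proof (cases "2 \<le> k")
      case False
      then have "k = 1" using k by auto
      then show ?thesis unfolding Gb_def lower_diag_def using Mmat_entry[where F=F and G=G, OF i k] i by (simp add: mmulA_entry)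
    next
      case True
      have k1: "k - 1 \<in> {1..n}" using True k by auto
      have Pk: "mmul n (P i) (Amat n) n k = (Lop n ^^ (i - 1)) P1 n (k - 1) - (\<Sum>m=1..i-1. (Lop n ^^ (i - 1 - m)) (F m) n (k - 1))"
        using closed[OF i nn k1] True k by (simp add: mmulA_entry)
      have Mk: "Mmat n F G i k = (\<Sum>m=1..i-1. (Lop n ^^ (i - 1 - m)) (F m) n (k - 1)) + G i k / 2"
        using Mmat_entry[OF i k] True by simp
      show ?thesis
      proof (cases "k \<le> i")
        case True
        have "(Lop n ^^ (i - 1)) P1 n (k - 1) = 0" using Lop_pow[OF nn k1, of "i - 1" P1] True by auto
        then show ?thesis using Pk Mk True unfolding Gb_def lower_diag_def by simp
      next
        case False
        have "(Lop n ^^ (i - 1)) P1 n (k - 1) = P1 (n - (i - 1)) (k - 1 - (i - 1))"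
          using Lop_pow[OF nn k1, of "i - 1" P1] False i by auto
        also have "\<dots> = T i (k - 1)"
        proof -
          have "k - 1 - (i - 1) \<le> n - (i - 1)" "n - (n - (i - 1)) + 1 = i" "k - 1 - (i - 1) + n - (n - (i - 1)) = k - 1"
            using i k False by auto
          then show ?thesis unfolding P1_def by simp
        qed
        also have "\<dots> = M i k" unfolding T_def using k \<open>2 \<le> k\<close> by auto
        finally have "(Lop n ^^ (i - 1)) P1 n (k - 1) = Mmat n F G i k" unfolding M_def .
        then show ?thesis using Pk Mk False unfolding Gb_def lower_diag_def by simp
      qed
    qed
  qed
  have "is_O3 n (Rfun n F G h (\<lambda>i j k. 0) Gb P Q)"
    by (rule O3_of_D2[OF n sP]) (use D in blast)
  then show ?thesis unfolding quad_equiv_Rfun Gb_def using sP sQ by blast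
qed




lemma minimality:
  assumes n: "1 \<le> n" and F: "\<forall>i\<in>{1..n}. symm n (F i)" and Fb: "\<forall>i\<in>{1..n}. symm n (Fb i)"
    and qe: "quad_equiv n F G h Fb Gb (\<lambda>_. 0)"
  shows "nterms n (\<lambda>i j k. 0) (\<lambda>j k. 2 * lower_diag (Mmat n F G) j k) \<le> nterms n Fb Gb"
proof -
  define M where "M = Mmat n F G"
  obtain P Q where sP: "\<forall>i\<in>{1..n}. symm n (P i)" and sQ: "symm n Q" and O: "is_O3 n (Rfun n F G h Fb Gb P Q)"
    using qe unfolding quad_equiv_Rfun by blast
  have ext: "(\<forall>a\<in>{1..n}. \<forall>b\<in>{1..n}. Smat n F Fb P Q i a b = 0) \<and> P i n n = h i \<and>
     (\<forall>k\<in>{1..n}. Gb i k + 2 * mmul n (P i) (Amat n) n k - G i k = 0)" if i: "i \<in> {1..n}" for i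
  proof (rule D2_extract)
    show "\<forall>x \<nu>. D2 n F G h Fb Gb P Q x \<nu> i = 0" using D2_of_O3[OF n sP O i] by blast
    have "i < n \<Longrightarrow> symm n (P (Suc i))" using sP i by auto
    then show "symm n (Smat n F Fb P Q i)" using symm_Smat Fb sP sQ F i by blast
  qed
  define C where "C = (\<lambda>m a b. F m a b - Fb m a b)"
  have rec: "\<forall>m. 1 \<le> m \<and> m < n \<longrightarrow> (\<forall>a\<in>{1..n}. \<forall>b\<in>{1..n}. P (Suc m) a b = Lop n (P m) a b - C m a b)"
  proof (intro allI impI ballI)
    fix m a b assume m: "1 \<le> m \<and> m < n" and a: "a \<in> {1..n}" and b: "b \<in> {1..n}"
    have "Smat n F Fb P Q m a b = 0" using ext[of m] m a b by auto
    then show "P (Suc m) a b = Lop n (P m) a b - C m a b" using m unfolding Smat_def C_def by simp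
  qed
  have nn: "n \<in> {1..n}" using n by auto
  have key: "2 * M i k = Gb i k + 2 * (\<Sum>m=1..i-1. (Lop n ^^ (i - 1 - m)) (Fb m) n (k - 1))"
    if i: "i \<in> {1..n}" and k: "k \<in> {1..n}" and ki: "k \<le> i" and k2: "2 \<le> k" for i k
  proof -
    have k1: "k - 1 \<in> {1..n}" using k k2 by auto
    have V0: "Gb i k + 2 * mmul n (P i) (Amat n) n k - G i k = 0" using ext[OF i] k by blast
    have V: "Gb i k + 2 * P i n (k - 1) - G i k = 0" using V0 k k2 by (simp add: mmulA_entry)
    have cl: "P i n (k - 1) = (Lop n ^^ (i - 1)) (P 1) n (k - 1) - (\<Sum>m=1..i-1. (Lop n ^^ (i - 1 - m)) (C m) n (k - 1))"
      by (rule P_closed'[OF rec i nn k1])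
    have z: "(Lop n ^^ (i - 1)) (P 1) n (k - 1) = 0" using Lop_pow[OF nn k1, of "i - 1" "P 1"] ki k2 by auto
    have lin: "(Lop n ^^ (i - 1 - m)) (C m) n (k - 1) = (Lop n ^^ (i - 1 - m)) (F m) n (k - 1) - (Lop n ^^ (i - 1 - m)) (Fb m) n (k - 1)" for m
      using Lop_pow[OF nn k1, of "i - 1 - m" "C m"] Lop_pow[OF nn k1, of "i - 1 - m" "F m"] Lop_pow[OF nn k1, of "i - 1 - m" "Fb m"]
      unfolding C_def by simp
    have Mk: "M i k = (\<Sum>m=1..i-1. (Lop n ^^ (i - 1 - m)) (F m) n (k - 1)) + G i k / 2"
      using Mmat_entry[where F=F and G=G, OF i k] k2 unfolding M_def by simp
    show ?thesis using V cl z Mk unfolding lin sum_subtractf by simp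
  qed
  have key1: "2 * M i 1 = Gb i 1" if i: "i \<in> {1..n}" for i
  proof -
    have "Gb i 1 + 2 * mmul n (P i) (Amat n) n 1 - G i 1 = 0" using ext[OF i] n by auto
    moreover have "1 \<in> {1..n}" using n by auto
    ultimately show ?thesis using Mmat_entry[where F=F and G=G and k=1, OF i]
      unfolding M_def by (simp add: mmulA_entry)
  qed
  define Pw where "Pw = (\<lambda>i k m. m \<in> {1..i-1} \<and> i - 1 - m < k - 1 \<and> Fb m (n - (i - 1 - m)) (k - 1 - (i - 1 - m)) \<noteq> 0)"
  define Sg where "Sg = {(i, j). i \<in> {1..n} \<and> j \<in> {1..n} \<and> 2 * lower_diag M i j \<noteq> 0}"
  define A' where "A' = {(i, j, k). i \<in> {1..n} \<and> j \<in> {1..n} \<and> k \<in> {1..n} \<and> j \<le> k \<and> Fb i j k \<noteq> 0}"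
  define B' where "B' = {(i, j). i \<in> {1..n} \<and> j \<in> {1..n} \<and> Gb i j \<noteq> 0}"
  define S2 where "S2 = Sg - B'"
  have witness: "\<exists>m. Pw i k m" if p: "(i, k) \<in> S2" for i k
  proof -
    have i: "i \<in> {1..n}" and k: "k \<in> {1..n}" and L: "2 * lower_diag M i k \<noteq> 0" and G0: "Gb i k = 0"
      using p unfolding S2_def Sg_def B'_def by auto
    have ki: "k \<le> i" and Mne: "M i k \<noteq> 0" using L unfolding lower_diag_def by (auto split: if_splits)
    have k2: "2 \<le> k" using key1[OF i] Mne G0 k by (cases "k = 1") auto
    have "(\<Sum>m=1..i-1. (Lop n ^^ (i - 1 - m)) (Fb m) n (k - 1)) \<noteq> 0" using key[OF i k ki k2] G0 Mne by simp
    then obtain m where m: "m \<in> {1..i-1}" and ne: "(Lop n ^^ (i - 1 - m)) (Fb m) n (k - 1) \<noteq> 0"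
      by (meson sum.neutral)
    have k1: "k - 1 \<in> {1..n}" using k k2 by auto
    have "i - 1 - m < k - 1 \<and> Fb m (n - (i - 1 - m)) (k - 1 - (i - 1 - m)) \<noteq> 0"
      using ne Lop_pow[OF nn k1, of "i - 1 - m" "Fb m"] by (auto split: if_splits)
    then show ?thesis unfolding Pw_def using m by blast
  qed
  define wit where "wit = (\<lambda>i k. SOME m. Pw i k m)"
  have witP: "Pw i k (wit i k)" if "(i, k) \<in> S2" for i k
    unfolding wit_def using witness[OF that] by (rule someI_ex)
  define g where "g = (\<lambda>(i, k). (wit i k, k - 1 - (i - 1 - wit i k), n - (i - 1 - wit i k)))"
  have gA: "g p \<in> A'" if p: "p \<in> S2" for p
  proof -
    obtain i k where pk: "p = (i, k)" by (cases p)
    have i: "i \<in> {1..n}" and k: "k \<in> {1..n}" using p pk unfolding S2_def Sg_def by auto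
    define m where "m = wit i k"
    have P: "Pw i k m" using witP p pk unfolding m_def by simp
    have m: "m \<in> {1..n}" and r: "n - (i - 1 - m) \<in> {1..n}" and c: "k - 1 - (i - 1 - m) \<in> {1..n}"
      and cr: "k - 1 - (i - 1 - m) \<le> n - (i - 1 - m)"
      using P i k unfolding Pw_def by auto
    have ne: "Fb m (n - (i - 1 - m)) (k - 1 - (i - 1 - m)) \<noteq> 0" using P unfolding Pw_def by simp
    have "Fb m (k - 1 - (i - 1 - m)) (n - (i - 1 - m)) = Fb m (n - (i - 1 - m)) (k - 1 - (i - 1 - m))"
      using Fb m r c unfolding symm_def by blast
    moreover have "g p = (m, k - 1 - (i - 1 - m), n - (i - 1 - m))" unfolding g_def pk m_def by simp
    ultimately show ?thesis using m r c cr ne unfolding A'_def by simp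
  qed
  have ginj: "inj_on g S2"
  proof (rule inj_onI)
    fix p p' assume p: "p \<in> S2" and p': "p' \<in> S2" and eq: "g p = g p'"
    obtain i k where pk: "p = (i, k)" by (cases p)
    obtain i' k' where pk': "p' = (i', k')" by (cases p')
    have i: "i \<in> {1..n}" and k: "k \<in> {1..n}" using p pk unfolding S2_def Sg_def by auto
    have i': "i' \<in> {1..n}" and k': "k' \<in> {1..n}" using p' pk' unfolding S2_def Sg_def by auto
    define m where "m = wit i k"
    define m' where "m' = wit i' k'"
    have P: "Pw i k m" using witP p pk unfolding m_def by simp
    have P': "Pw i' k' m'" using witP p' pk' unfolding m'_def by simp
    have g1: "g p = (m, k - 1 - (i - 1 - m), n - (i - 1 - m))" unfolding g_def pk m_def by simp
    have g2: "g p' = (m', k' - 1 - (i' - 1 - m'), n - (i' - 1 - m'))" unfolding g_def pk' m'_def by simp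
    have e: "m = m'" "k - 1 - (i - 1 - m) = k' - 1 - (i' - 1 - m')" "n - (i - 1 - m) = n - (i' - 1 - m')"
      using eq unfolding g1 g2 by auto
    have f: "1 \<le> m" "m \<le> i - 1" "i - 1 - m < k - 1" "1 \<le> m'" "m' \<le> i' - 1" "i' - 1 - m' < k' - 1"
      using P P' unfolding Pw_def by auto
    define d where "d = i - 1 - m"
    define d' where "d' = i' - 1 - m'"
    have hi: "i = m + 1 + d" using f(1,2) i unfolding d_def by simp
    have hi': "i' = m' + 1 + d'" using f(4,5) i' unfolding d'_def by simp
    have dk: "d < k - 1" "d' < k' - 1" using f(3,6) unfolding d_def d'_def by simp_all
    have dn: "d < n" "d' < n" using dk k k' by auto
    have "n - d = n - d'" using e(3) unfolding d_def d'_def .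
    then have dd: "d = d'" using dn by linarith
    have kk: "k - 1 - d = k' - 1 - d'" using e(2) unfolding d_def d'_def .
    have hk: "k = (k - 1 - d) + 1 + d" using dk by linarith
    have hk': "k' = (k' - 1 - d') + 1 + d'" using dk by linarith
    have "i = i' \<and> k = k'" using hi hi' e(1) dd hk hk' kk by metis
    then show "p = p'" using pk pk' by simp
  qed
  have finA: "finite A'"
  proof -
    have "A' \<subseteq> {1..n} \<times> {1..n} \<times> {1..n}" unfolding A'_def by auto
    then show ?thesis by (rule finite_subset) simp
  qed
  have finB: "finite B'"
  proof -
    have "B' \<subseteq> {1..n} \<times> {1..n}" unfolding B'_def by auto
    then show ?thesis by (rule finite_subset) simp
  qed
  have c2: "card S2 \<le> card A'"
    by (rule card_inj_on_le[OF ginj _ finA]) (use gA in blast)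
  have c1: "card (Sg \<inter> B') \<le> card B'" by (rule card_mono[OF finB]) blast
  have "Sg = (Sg \<inter> B') \<union> S2" unfolding S2_def by blast
  then have "card Sg \<le> card (Sg \<inter> B') + card S2" by (metis card_Un_le)
  then have "card Sg \<le> card A' + card B'" using c1 c2 by simp
  moreover have "nterms n (\<lambda>i j k. 0) (\<lambda>j k. 2 * lower_diag (Mmat n F G) j k) = card Sg"
  proof -
    have e0: "{(i::nat, j::nat, k::nat). False} = {}" by auto
    show ?thesis unfolding nterms_def Sg_def M_def by (simp add: e0)
  qed
  moreover have "nterms n Fb Gb = card A' + card B'"
    unfolding nterms_def A'_def B'_def ..
  ultimately show ?thesis by simp
qed



theorem theorem4p7:
  fixes n :: nat
    and F :: "nat \<Rightarrow> nat \<Rightarrow> nat \<Rightarrow> real"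
    and G :: "nat \<Rightarrow> nat \<Rightarrow> real"
    and h :: "nat \<Rightarrow> real"
  assumes "n \<ge> 2"
    and "\<forall>i\<in>{1..n}. symm n (F i)"
  shows "is_brunovsky n F G h (\<lambda>i j k. 0) (\<lambda>j k. 2 * lower_diag (Mmat n F G) j k)"
proof -
  have n: "1 \<le> n" using assms(1) by simp
  show ?thesis unfolding is_brunovsky_def
  proof (intro conjI allI impI)
    show "\<forall>i\<in>{1..n}. symm n ((\<lambda>i j k. 0::real) i)" by (simp add: symm_def)
    show "quad_equiv n F G h (\<lambda>i j k. 0) (\<lambda>j k. 2 * lower_diag (Mmat n F G) j k) (\<lambda>_. 0)"
      by (rule existence[OF n assms(2)])
  next
    fix Fb' Gb' assume "(\<forall>i\<in>{1..n}. symm n (Fb' i)) \<and> quad_equiv n F G h Fb' Gb' (\<lambda>_. 0)"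
    then show "nterms n (\<lambda>i j k. 0) (\<lambda>j k. 2 * lower_diag (Mmat n F G) j k) \<le> nterms n Fb' Gb'"
      using minimality[OF n assms(2)] by blast
  qed
qed

end
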